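(* Let $P$ be the open polyhedron consisting of $k\ge 3$ triangles $T_1,\dots,T_k$ arranged cyclically around a common vertex $v$, where consecutive triangles $T_i,T_{i+1}$ (indices mod $k$) share an edge incident to $v$, so that $v$ is an interior vertex and the boundary of $P$ is the closed cycle formed by the edges of the triangles opposite $v$. If $v$ has negative curvature (the sum of the angles of the $T_i$ at $v$ exceeds $2\pi$), then $P$ has no general unfolding.
   Context: A polyhedron is a connected set of closed planar polygons in $\mathbb{R}^3$ such that any intersection of two of them is a collection of common vertices and edges, and each edge is shared by at most two polygons; edges in only one polygon form the boundary. The curvature of a non-boundary vertex is $2\pi$ minus the sum of the face angles at it. A cutting of $P$ is a union $C$ of finitely many line segments on $P$ (possibly crossing faces), containing only finitely many boundary points of $P$, such that $P-C$ is connected and can be isometrically embedded in the plane without overlap; the result is a general unfolding. *)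

theory Defs
  imports "HOL-Analysis.Analysis"
begin

type_synonym pt3 = "real^3"
type_synonym pt2 = "real^2"

definition vangle :: "pt3 \<Rightarrow> pt3 \<Rightarrow> real" where
  "vangle u w = arccos ((u \<bullet> w) / (norm u * norm w))"

definition tri :: "pt3 \<Rightarrow> pt3 \<Rightarrow> pt3 \<Rightarrow> pt3 set" where
  "tri p q r = convex hull {p, q, r}"

definition is_cutting :: "pt3 set \<Rightarrow> pt3 set \<Rightarrow> pt3 set \<Rightarrow> bool" where
  "is_cutting P B C \<longleftrightarrow>
     (\<exists>S. finite S \<and> C = (\<Union>(p, q)\<in>S. closed_segment p q)
          \<and> (\<forall>(p, q)\<in>S. closed_segment p q \<subseteq> P))
     \<and> finite (C \<inter> B)
     \<and> connected (P - C)"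

text \<open>f is an isometric embedding of (\<Union>faces) - C into the plane without overlap:
  f is injective on (\<Union>faces) - C and, on each connected component of each
  face minus the cut, f preserves distances (i.e. it is locally isometric
  for the intrinsic metric of the surface).\<close>
definition flat_embedding :: "pt3 set set \<Rightarrow> pt3 set \<Rightarrow> (pt3 \<Rightarrow> pt2) \<Rightarrow> bool" where
  "flat_embedding faces C f \<longleftrightarrow>
     inj_on f (\<Union>faces - C)
     \<and> (\<forall>F\<in>faces. \<forall>x\<in>F - C. \<forall>y\<in>connected_component_set (F - C) x.
           dist (f x) (f y) = dist x y)"

definition has_general_unfolding :: "pt3 set set \<Rightarrow> pt3 set \<Rightarrow> bool" where
  "has_general_unfolding faces B \<longleftrightarrow>
     (\<exists>C f. is_cutting (\<Union>faces) B C \<and> flat_embedding faces C f)"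

end

theory Submission
  imports Defs
begin


lemma ip_formula:
  fixes a b c :: "'a::real_inner"
  shows "(a - c) \<bullet> (b - c) = ((norm (a-c))\<^sup>2 + (norm (b-c))\<^sup>2 - (norm (a-b))\<^sup>2) / 2"
proof -
  have "a - b = (a - c) - (b - c)" by simp
  then have "(norm (a-b))\<^sup>2 = (norm (a-c))\<^sup>2 + (norm (b-c))\<^sup>2 - 2 * ((a - c) \<bullet> (b - c))"
    by (simp only: power2_norm_eq_inner inner_diff_left inner_diff_right inner_commute[of "b-c" "a-c"]) (simp add: inner_diff_left inner_diff_right inner_commute)
  then show ?thesis by simp
qed

lemma polar:
  fixes f :: "'a::real_inner \<Rightarrow> 'b::real_inner"
  assumes iso: "\<forall>y\<in>S. \<forall>y'\<in>S. dist (f y) (f y') = dist y y'"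
    and "a \<in> S" "b \<in> S" "c \<in> S"
  shows "(f a - f c) \<bullet> (f b - f c) = (a - c) \<bullet> (b - c)"
proof -
  have "norm (f a - f c) = norm (a - c)" "norm (f b - f c) = norm (b - c)" "norm (f a - f b) = norm (a - b)"
    using iso assms by (auto simp: dist_norm)
  then show ?thesis by (simp add: ip_formula)
qed

lemma ext_iso:
  fixes f :: "'a::real_inner \<Rightarrow> 'b::real_inner"
  assumes iso: "\<forall>y\<in>S. \<forall>y'\<in>S. dist (f y) (f y') = dist y y'"
    and S: "u \<in> S" "u + D1 \<in> S" "u + D2 \<in> S" "y \<in> S"
    and y: "y = u + \<alpha> *\<^sub>R D1 + \<beta> *\<^sub>R D2"
  shows "f y = f u + \<alpha> *\<^sub>R (f (u+D1) - f u) + \<beta> *\<^sub>R (f (u+D2) - f u)"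
proof -
  define F1 where "F1 = f (u+D1) - f u"
  define F2 where "F2 = f (u+D2) - f u"
  define G where "G = f y - f u"
  define z where "z = G - \<alpha> *\<^sub>R F1 - \<beta> *\<^sub>R F2"
  have g11: "F1 \<bullet> F1 = D1 \<bullet> D1" using polar[OF iso S(2) S(2) S(1)] by (simp add: F1_def)
  have g22: "F2 \<bullet> F2 = D2 \<bullet> D2" using polar[OF iso S(3) S(3) S(1)] by (simp add: F2_def)
  have g12: "F1 \<bullet> F2 = D1 \<bullet> D2" using polar[OF iso S(2) S(3) S(1)] by (simp add: F1_def F2_def)
  have gy1: "G \<bullet> F1 = (y - u) \<bullet> D1" using polar[OF iso S(4) S(2) S(1)] by (simp add: F1_def G_def)
  have gy2: "G \<bullet> F2 = (y - u) \<bullet> D2" using polar[OF iso S(4) S(3) S(1)] by (simp add: F2_def G_def)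
  have gyy: "G \<bullet> G = (y - u) \<bullet> (y - u)" using polar[OF iso S(4) S(4) S(1)] by (simp add: G_def)
  have yu: "y - u = \<alpha> *\<^sub>R D1 + \<beta> *\<^sub>R D2" using y by simp
  have g21: "F2 \<bullet> F1 = D2 \<bullet> D1" using g12 by (simp add: inner_commute)
  have e1: "(y - u) \<bullet> D1 = \<alpha> * (D1 \<bullet> D1) + \<beta> * (D2 \<bullet> D1)" by (simp add: yu inner_add_left)
  have e2: "(y - u) \<bullet> D2 = \<alpha> * (D1 \<bullet> D2) + \<beta> * (D2 \<bullet> D2)" by (simp add: yu inner_add_left)
  have e3: "(y - u) \<bullet> (y - u) = \<alpha> * ((y - u) \<bullet> D1) + \<beta> * ((y - u) \<bullet> D2)"
    by (subst (2) yu) (simp add: inner_add_right)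
  have z1: "z \<bullet> F1 = 0"
  proof -
    have "z \<bullet> F1 = G \<bullet> F1 - \<alpha> * (F1 \<bullet> F1) - \<beta> * (F2 \<bullet> F1)" by (simp add: z_def inner_diff_left)
    then show ?thesis using g11 g21 gy1 e1 by simp
  qed
  have z2: "z \<bullet> F2 = 0"
  proof -
    have "z \<bullet> F2 = G \<bullet> F2 - \<alpha> * (F1 \<bullet> F2) - \<beta> * (F2 \<bullet> F2)" by (simp add: z_def inner_diff_left)
    then show ?thesis using g22 g12 gy2 e2 by simp
  qed
  have zG: "z \<bullet> G = 0"
  proof -
    have "z \<bullet> G = G \<bullet> G - \<alpha> * (F1 \<bullet> G) - \<beta> * (F2 \<bullet> G)" by (simp add: z_def inner_diff_left)
    moreover have "F1 \<bullet> G = G \<bullet> F1" "F2 \<bullet> G = G \<bullet> F2" by (simp_all add: inner_commute)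
    ultimately show ?thesis using gyy gy1 gy2 e3 by simp
  qed
  have "z \<bullet> z = z \<bullet> G - \<alpha> * (z \<bullet> F1) - \<beta> * (z \<bullet> F2)"
    by (simp add: z_def[of] inner_diff_right)
  then have "z \<bullet> z = 0" using z1 z2 zG by simp
  then have "z = 0" by simp
  then show ?thesis by (simp add: z_def G_def F1_def F2_def algebra_simps)
qed




lemma count_base:
  fixes h lo hi :: real and \<phi> :: "int \<Rightarrow> real"
  assumes h: "h > 0" and S: "finite S" and inj: "inj \<phi>"
    and sub: "\<forall>m::int. lo < m*h \<and> m*h < hi \<longrightarrow> \<phi> m \<in> S"
  shows "real (card S) \<ge> (hi - lo)/h - 1"
proof -
  define I where "I = {\<lfloor>lo/h\<rfloor>+1 ..< \<lceil>hi/h\<rceil>}"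
  have "\<phi> ` I \<subseteq> S"
  proof
    fix y assume "y \<in> \<phi> ` I"
    then obtain m where m: "m \<in> I" "y = \<phi> m" by auto
    have "real_of_int m > lo/h" using m(1) unfolding I_def
      by (smt (verit, ccfv_SIG) atLeastLessThan_iff floor_less_cancel floor_of_int)
    then have "lo < m*h" using h by (simp add: pos_divide_less_eq)
    moreover have "real_of_int m < hi/h" using m(1) unfolding I_def
      by (simp add: less_ceiling_iff)
    then have "m*h < hi" using h by (simp add: pos_less_divide_eq)
    ultimately show "y \<in> S" using sub m by auto
  qed
  then have "card (\<phi> ` I) \<le> card S" using S by (simp add: card_mono)
  moreover have "card (\<phi> ` I) = card I" using inj by (simp add: card_image inj_on_subset)
  ultimately have "card I \<le> card S" by simp
  moreover have "card I = nat (\<lceil>hi/h\<rceil> - (\<lfloor>lo/h\<rfloor>+1))" unfolding I_def by simp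
  ultimately have "real (nat (\<lceil>hi/h\<rceil> - (\<lfloor>lo/h\<rfloor>+1))) \<le> real (card S)" by simp
  moreover have "real (nat (\<lceil>hi/h\<rceil> - (\<lfloor>lo/h\<rfloor>+1))) \<ge> hi/h - lo/h - 1"
  proof -
    have "real_of_int (\<lceil>hi/h\<rceil> - (\<lfloor>lo/h\<rfloor>+1)) \<ge> hi/h - lo/h - 1"
      using le_of_int_ceiling[of "hi/h"] of_int_floor_le[of "lo/h"] by (simp del: le_of_int_ceiling of_int_floor_le)
    then show ?thesis by linarith
  qed
  ultimately show ?thesis by (simp add: diff_divide_distrib)
qed

lemma count_gen:
  fixes h :: real and G D :: "real set"
  assumes h: "h > 0" and G: "finite G" and D: "finite D"
    and hyp: "\<And>c e. a \<le> c \<Longrightarrow> c < e \<Longrightarrow> e \<le> b \<Longrightarrow> {c<..<e} \<inter> D = {} \<Longrightarrow>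
        (\<exists>\<theta> \<sigma>. (\<sigma> = 1 \<or> \<sigma> = -1) \<and> (\<forall>t\<in>{c<..<e}. t \<in> G \<longleftrightarrow> (\<exists>m::int. \<theta> + \<sigma>*t = m*h)))"
    and ab: "a \<le> b"
  shows "real (card (G \<inter> {a<..<b})) \<ge> (b-a)/h - real (card (D \<inter> {a<..<b})) - 1"
  using hyp ab
proof (induction "card (D \<inter> {a<..<b})" arbitrary: a b rule: less_induct)
  case less
  show ?case
  proof (cases "D \<inter> {a<..<b} = {}")
    case True
    show ?thesis
    proof (cases "a = b")
      case True then show ?thesis by simp
    next
      case False
      then have "a < b" using less.prems by simp
      then obtain \<theta> \<sigma> where \<sigma>: "\<sigma> = 1 \<or> \<sigma> = -1"
        and th: "\<forall>t\<in>{a<..<b}. t \<in> G \<longleftrightarrow> (\<exists>m::int. \<theta> + \<sigma>*t = m*h)"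
        using less.prems(1)[of a b] \<open>a < b\<close> True by (simp add: Int_commute) blast
      have fin: "finite (G \<inter> {a<..<b})" using G by simp
      from \<sigma> have "real (card (G \<inter> {a<..<b})) \<ge> (b-a)/h - 1"
      proof
        assume s: "\<sigma> = 1"
        have "real (card (G \<inter> {a<..<b})) \<ge> ((b+\<theta>) - (a+\<theta>))/h - 1"
        proof (rule count_base[OF h fin, of "\<lambda>m. m*h - \<theta>"])
          show "inj (\<lambda>m::int. m*h - \<theta>)" using h by (auto simp: inj_def)
          show "\<forall>m::int. a + \<theta> < m*h \<and> m*h < b + \<theta> \<longrightarrow> m*h - \<theta> \<in> G \<inter> {a<..<b}"
          proof (intro allI impI)
            fix m :: int assume m: "a + \<theta> < m*h \<and> m*h < b + \<theta>"
            define t where "t = m*h - \<theta>"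
            have t: "t \<in> {a<..<b}" using m by (simp add: t_def)
            have "\<theta> + \<sigma>*t = m*h" by (simp add: t_def s)
            then have "t \<in> G" using th t by blast
            then show "m*h - \<theta> \<in> G \<inter> {a<..<b}" using t by (simp add: t_def)
          qed
        qed
        then show ?thesis by simp
      next
        assume s: "\<sigma> = -1"
        have "real (card (G \<inter> {a<..<b})) \<ge> ((\<theta>-a) - (\<theta>-b))/h - 1"
        proof (rule count_base[OF h fin, of "\<lambda>m. \<theta> - m*h"])
          show "inj (\<lambda>m::int. \<theta> - m*h)" using h by (auto simp: inj_def)
          show "\<forall>m::int. \<theta> - b < m*h \<and> m*h < \<theta> - a \<longrightarrow> \<theta> - m*h \<in> G \<inter> {a<..<b}"
          proof (intro allI impI)
            fix m :: int assume m: "\<theta> - b < m*h \<and> m*h < \<theta> - a"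
            define t where "t = \<theta> - m*h"
            have t: "t \<in> {a<..<b}" using m by (simp add: t_def)
            have "\<theta> + \<sigma>*t = m*h" by (simp add: t_def s)
            then have "t \<in> G" using th t by blast
            then show "\<theta> - m*h \<in> G \<inter> {a<..<b}" using t by (simp add: t_def)
          qed
        qed
        then show ?thesis by simp
      qed
      then show ?thesis using True by simp
    qed
  next
    case False
    then obtain d where d: "d \<in> D" "a < d" "d < b" by auto
    have split: "D \<inter> {a<..<b} = (D \<inter> {a<..<d}) \<union> {d} \<union> (D \<inter> {d<..<b})" using d by auto
    have c1: "card (D \<inter> {a<..<d}) < card (D \<inter> {a<..<b})"
      by (rule psubset_card_mono) (use D d in auto)
    have c2: "card (D \<inter> {d<..<b}) < card (D \<inter> {a<..<b})"
      by (rule psubset_card_mono) (use D d in auto)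
    have csum: "card (D \<inter> {a<..<b}) = card (D \<inter> {a<..<d}) + card (D \<inter> {d<..<b}) + 1"
    proof -
      have "card (D \<inter> {a<..<b}) = card ((D \<inter> {a<..<d}) \<union> {d}) + card (D \<inter> {d<..<b})"
        unfolding split by (rule card_Un_disjoint) (use D in auto)
      also have "card ((D \<inter> {a<..<d}) \<union> {d}) = card (D \<inter> {a<..<d}) + 1"
        using D by (simp add: card_insert_if)
      finally show ?thesis by simp
    qed
    have IH1: "real (card (G \<inter> {a<..<d})) \<ge> (d-a)/h - real (card (D \<inter> {a<..<d})) - 1"
    proof (rule less.hyps[OF c1])
      fix c e assume ce: "a \<le> c" "c < e" "e \<le> d" "{c<..<e} \<inter> D = {}"
      have "e \<le> b" using ce(3) d(3) by simp
      then show "\<exists>\<theta> \<sigma>. (\<sigma> = 1 \<or> \<sigma> = -1) \<and> (\<forall>t\<in>{c<..<e}. t \<in> G \<longleftrightarrow> (\<exists>m::int. \<theta> + \<sigma>*t = m*h))"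
        using less.prems(1)[OF ce(1,2) _ ce(4)] by simp
    next
      show "a \<le> d" using d by simp
    qed
    have IH2: "real (card (G \<inter> {d<..<b})) \<ge> (b-d)/h - real (card (D \<inter> {d<..<b})) - 1"
    proof (rule less.hyps[OF c2])
      fix c e assume ce: "d \<le> c" "c < e" "e \<le> b" "{c<..<e} \<inter> D = {}"
      have "a \<le> c" using ce(1) d(2) by simp
      then show "\<exists>\<theta> \<sigma>. (\<sigma> = 1 \<or> \<sigma> = -1) \<and> (\<forall>t\<in>{c<..<e}. t \<in> G \<longleftrightarrow> (\<exists>m::int. \<theta> + \<sigma>*t = m*h))"
        using less.prems(1)[OF _ ce(2,3,4)] by simp
    next
      show "d \<le> b" using d by simp
    qed
    have "card (G \<inter> {a<..<d}) + card (G \<inter> {d<..<b}) = card ((G \<inter> {a<..<d}) \<union> (G \<inter> {d<..<b}))"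
      by (rule card_Un_disjoint[symmetric]) (use G in auto)
    also have "\<dots> \<le> card (G \<inter> {a<..<b})"
      by (rule card_mono) (use G d in auto)
    finally have "real (card (G \<inter> {a<..<d})) + real (card (G \<inter> {d<..<b})) \<le> real (card (G \<inter> {a<..<b}))"
      by linarith
    moreover have "(d-a)/h + (b-d)/h = (b-a)/h" by (simp add: diff_divide_distrib)
    ultimately show ?thesis using IH1 IH2 csum by simp
  qed
qed




locale pconf =
  fixes k :: nat and v :: pt3 and a :: "nat \<Rightarrow> pt3" and C :: "pt3 set"
    and f :: "pt3 \<Rightarrow> pt2" and Sg :: "(pt3 \<times> pt3) set" and T :: "nat \<Rightarrow> pt3 set"
  assumes T_def: "T = (\<lambda>i. tri v (a i) (a (Suc i mod k)))"
    and k3: "k \<ge> 3"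
    and nondeg: "\<forall>i<k. \<not> collinear {v, a i, a (Suc i mod k)}"
    and inter: "\<forall>i<k. \<forall>j<k. i \<noteq> j \<longrightarrow>
        T i \<inter> T j = (if j = Suc i mod k then closed_segment v (a j)
                      else if i = Suc j mod k then closed_segment v (a i)
                      else {v})"
    and neg_curv: "(\<Sum>i<k. vangle (a i - v) (a (Suc i mod k) - v)) > 2 * pi"
    and Sg_fin: "finite Sg" and C_def: "C = (\<Union>(p, q)\<in>Sg. closed_segment p q)"
    and conn: "connected (\<Union>(T ` {..<k}) - C)"
    and finj: "inj_on f (\<Union>(T ` {..<k}) - C)"
    and iso: "\<forall>F\<in>T ` {..<k}. \<forall>x\<in>F - C. \<forall>y\<in>connected_component_set (F - C) x.
           dist (f x) (f y) = dist x y"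
begin

abbreviation "b i \<equiv> a (Suc i mod k)"
abbreviation "d1 i \<equiv> a i - v"
abbreviation "d2 i \<equiv> b i - v"
abbreviation "PP \<equiv> \<Union>(T ` {..<k})"
abbreviation "cc i x \<equiv> connected_component_set (T i - C) x"

lemma face: "T i = {v + s *\<^sub>R d1 i + t *\<^sub>R d2 i | s t. 0 \<le> s \<and> 0 \<le> t \<and> s + t \<le> 1}"
  by (simp add: T_def tri_def convex_hull_3_alt)

lemma faceI: "0 \<le> s \<Longrightarrow> 0 \<le> t \<Longrightarrow> s + t \<le> 1 \<Longrightarrow> v + s *\<^sub>R d1 i + t *\<^sub>R d2 i \<in> T i"
  unfolding face by blast

lemma faceE: assumes "x \<in> T i"
  obtains s t where "0 \<le> s" "0 \<le> t" "s + t \<le> 1" "x = v + s *\<^sub>R d1 i + t *\<^sub>R d2 i"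
  using assms unfolding face by blast

lemma ncol: "i < k \<Longrightarrow> \<not> collinear {0, d1 i, d2 i}"
proof -
  assume "i < k"
  then have "\<not> collinear {v, a i, b i}" using nondeg by simp
  moreover have "{v, a i, b i} = {a i, v, b i}" by auto
  ultimately have "\<not> collinear {a i, v, b i}" by simp
  then show ?thesis by (subst (asm) collinear_3) simp
qed

lemma indep: assumes "i < k" "s *\<^sub>R d1 i + t *\<^sub>R d2 i = 0" shows "s = 0 \<and> t = 0"
proof -
  have nc: "\<not> (d1 i = 0 \<or> d2 i = 0 \<or> (\<exists>c. d2 i = c *\<^sub>R d1 i))"
    using ncol[OF assms(1)] by (simp add: collinear_lemma)
  have "t = 0"
  proof (rule ccontr)
    assume "t \<noteq> 0"
    have h: "t *\<^sub>R d2 i = - (s *\<^sub>R d1 i)" using assms(2)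
      by (simp only: eq_neg_iff_add_eq_0 add.commute)
    have "d2 i = inverse t *\<^sub>R (t *\<^sub>R d2 i)" using \<open>t \<noteq> 0\<close> by simp
    also have "\<dots> = (- s / t) *\<^sub>R d1 i" unfolding h by (simp add: divide_inverse)
    finally have "d2 i = (- s / t) *\<^sub>R d1 i" .
    then show False using nc by blast
  qed
  then have "s *\<^sub>R d1 i = 0" using assms(2) by simp
  then have "s = 0" using nc by simp
  then show ?thesis using \<open>t = 0\<close> by simp
qed

lemma coord: assumes "i < k" "v + s *\<^sub>R d1 i + t *\<^sub>R d2 i = v + s' *\<^sub>R d1 i + t' *\<^sub>R d2 i"
  shows "s = s' \<and> t = t'"
proof -
  have "(s - s') *\<^sub>R d1 i + (t - t') *\<^sub>R d2 i = 0" using assms(2)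
    by (simp add: algebra_simps)
  then show ?thesis using indep[OF assms(1)] by force
qed

lemma C_closed: "closed C"
  unfolding C_def using Sg_fin by (intro closed_Union) (auto simp: closed_segment)

lemma T_closed: "closed (T i)"
  by (simp add: T_def tri_def compact_imp_closed finite_imp_compact_convex_hull)

lemma T_convex: "convex (T i)"
  by (simp add: T_def tri_def)

lemma ballcomp: assumes "x \<in> T i - C"
  shows "\<exists>r>0. ball x r \<inter> C = {} \<and> ball x r \<inter> T i \<subseteq> cc i x"
proof -
  have "open (- C)" using C_closed by auto
  then obtain r where r: "r > 0" "ball x r \<subseteq> - C" using assms open_contains_ball by blast
  have "ball x r \<inter> T i \<subseteq> cc i x"
    apply (rule connected_component_maximal)
    using assms r apply simp
     apply (rule convex_connected, rule convex_Int, simp, rule T_convex)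
    using r by auto
  then show ?thesis using r by blast
qed

lemma isocomp: assumes "i < k" "x \<in> T i - C" "y \<in> cc i x" "y' \<in> cc i x"
  shows "dist (f y) (f y') = dist y y'"
proof -
  have y: "y \<in> T i - C" using assms(3) connected_component_subset by blast
  have "cc i y = cc i x" using assms(3) connected_component_eq by blast
  then show ?thesis using iso assms(1,4) y by auto
qed

lemma small_norm: assumes "\<bar>\<alpha>\<bar> \<le> e" "\<bar>\<beta>\<bar> \<le> e"
  shows "norm (\<alpha> *\<^sub>R d1 i + \<beta> *\<^sub>R d2 i) \<le> e * (norm (d1 i) + norm (d2 i))"
proof -
  have "norm (\<alpha> *\<^sub>R d1 i + \<beta> *\<^sub>R d2 i) \<le> \<bar>\<alpha>\<bar> * norm (d1 i) + \<bar>\<beta>\<bar> * norm (d2 i)"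
    by (metis norm_scaleR norm_triangle_ineq)
  also have "\<dots> \<le> e * norm (d1 i) + e * norm (d2 i)"
    using assms by (intro add_mono mult_right_mono) auto
  finally show ?thesis by (simp add: algebra_simps)
qed

lemma three: assumes "i < k" "x \<in> T i - C"
  shows "\<exists>u \<delta>. \<delta> > 0 \<and> u \<in> cc i x \<and> u + \<delta> *\<^sub>R d1 i \<in> cc i x \<and> u + \<delta> *\<^sub>R d2 i \<in> cc i x"
proof -
  obtain r where r: "r > 0" "ball x r \<inter> T i \<subseteq> cc i x" using ballcomp[OF assms(2)] by blast
  obtain s t where st: "0 \<le> s" "0 \<le> t" "s + t \<le> 1" "x = v + s *\<^sub>R d1 i + t *\<^sub>R d2 i"
    using assms(2) faceE by blast
  define N where "N = norm (d1 i) + norm (d2 i)"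
  have "d1 i \<noteq> 0" using ncol[OF assms(1)] by (auto simp: collinear_lemma)
  then have N: "N > 0" unfolding N_def by (simp add: add_pos_nonneg)
  define \<epsilon> where "\<epsilon> = min 1 (r / (4*N))"
  have e: "\<epsilon> > 0" "\<epsilon> \<le> 1" "\<epsilon> * N \<le> r/4" using r N
    by (auto simp: \<epsilon>_def min_def field_simps)
  define s' where "s' = (1-\<epsilon>) * s + \<epsilon>/3"
  define t' where "t' = (1-\<epsilon>) * t + \<epsilon>/3"
  define \<delta> where "\<delta> = \<epsilon>/3"
  define u where "u = v + s' *\<^sub>R d1 i + t' *\<^sub>R d2 i"
  have sum: "s' + t' \<le> 1 - \<epsilon>/3"
  proof -
    have "(1-\<epsilon>)*(s+t) \<le> (1-\<epsilon>)*1" using st e by (intro mult_left_mono) auto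
    then show ?thesis unfolding s'_def t'_def by (simp add: algebra_simps)
  qed
  have pos: "0 \<le> s'" "0 \<le> t'" using st e unfolding s'_def t'_def by auto
  have inb: "y \<in> ball x r" if "y - x = \<alpha> *\<^sub>R d1 i + \<beta> *\<^sub>R d2 i" "\<bar>\<alpha>\<bar> \<le> \<epsilon>" "\<bar>\<beta>\<bar> \<le> \<epsilon>" for y \<alpha> \<beta>
  proof -
    have "norm (y - x) \<le> \<epsilon> * N" unfolding that(1) N_def by (rule small_norm) (use that in auto)
    then show ?thesis using e r by (simp add: dist_norm norm_minus_commute)
  qed
  have ux: "u - x = (\<epsilon>*(1/3 - s)) *\<^sub>R d1 i + (\<epsilon>*(1/3 - t)) *\<^sub>R d2 i"
    unfolding u_def st(4) s'_def t'_def by (simp add: algebra_simps)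
  have u1: "u \<in> cc i x"
  proof -
    have "u \<in> T i" unfolding u_def by (rule faceI) (use pos sum e in auto)
    moreover have "u \<in> ball x r"
    proof (rule inb)
      show "u - x = (\<epsilon>*(1/3 - s)) *\<^sub>R d1 i + (\<epsilon>*(1/3 - t)) *\<^sub>R d2 i"
        unfolding u_def st(4) s'_def t'_def by (simp add: algebra_simps)
      show "\<bar>\<epsilon>*(1/3 - s)\<bar> \<le> \<epsilon>" "\<bar>\<epsilon>*(1/3 - t)\<bar> \<le> \<epsilon>" using e st by (auto simp: abs_mult abs_le_iff)
    qed
    ultimately show ?thesis using r by blast
  qed
  have u2: "u + \<delta> *\<^sub>R d1 i \<in> cc i x"
  proof -
    have "u + \<delta> *\<^sub>R d1 i = v + (s' + \<delta>) *\<^sub>R d1 i + t' *\<^sub>R d2 i" unfolding u_def by (simp add: algebra_simps)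
    moreover have "\<dots> \<in> T i" by (rule faceI) (use pos sum e in \<open>auto simp: \<delta>_def\<close>)
    moreover have "u + \<delta> *\<^sub>R d1 i \<in> ball x r"
    proof (rule inb)
      have "u + \<delta> *\<^sub>R d1 i - x = (u - x) + \<delta> *\<^sub>R d1 i" by simp
      also have "\<dots> = (\<epsilon>*(1/3 - s) + \<delta>) *\<^sub>R d1 i + (\<epsilon>*(1/3 - t)) *\<^sub>R d2 i"
        unfolding ux by (simp add: scaleR_add_left)
      also have "\<epsilon>*(1/3 - s) + \<delta> = \<epsilon>*(2/3 - s)" by (simp add: \<delta>_def algebra_simps)
      finally show "u + \<delta> *\<^sub>R d1 i - x = (\<epsilon>*(2/3 - s)) *\<^sub>R d1 i + (\<epsilon>*(1/3 - t)) *\<^sub>R d2 i" .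
      show "\<bar>\<epsilon>*(2/3 - s)\<bar> \<le> \<epsilon>" "\<bar>\<epsilon>*(1/3 - t)\<bar> \<le> \<epsilon>" using e st by (auto simp: abs_mult abs_le_iff)
    qed
    ultimately show ?thesis using r by auto
  qed
  have u3: "u + \<delta> *\<^sub>R d2 i \<in> cc i x"
  proof -
    have "u + \<delta> *\<^sub>R d2 i = v + s' *\<^sub>R d1 i + (t' + \<delta>) *\<^sub>R d2 i" unfolding u_def by (simp add: algebra_simps)
    moreover have "\<dots> \<in> T i" by (rule faceI) (use pos sum e in \<open>auto simp: \<delta>_def\<close>)
    moreover have "u + \<delta> *\<^sub>R d2 i \<in> ball x r"
    proof (rule inb)
      have "u + \<delta> *\<^sub>R d2 i - x = (u - x) + \<delta> *\<^sub>R d2 i" by simp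
      also have "\<dots> = (\<epsilon>*(1/3 - s)) *\<^sub>R d1 i + (\<epsilon>*(1/3 - t) + \<delta>) *\<^sub>R d2 i"
        unfolding ux by (simp add: scaleR_add_left)
      also have "\<epsilon>*(1/3 - t) + \<delta> = \<epsilon>*(2/3 - t)" by (simp add: \<delta>_def algebra_simps)
      finally show "u + \<delta> *\<^sub>R d2 i - x = (\<epsilon>*(1/3 - s)) *\<^sub>R d1 i + (\<epsilon>*(2/3 - t)) *\<^sub>R d2 i" .
      show "\<bar>\<epsilon>*(1/3 - s)\<bar> \<le> \<epsilon>" "\<bar>\<epsilon>*(2/3 - t)\<bar> \<le> \<epsilon>" using e st by (auto simp: abs_mult abs_le_iff)
    qed
    ultimately show ?thesis using r by auto
  qed
  show ?thesis using u1 u2 u3 e(1) unfolding \<delta>_def by (intro exI[where x=u] exI[where x="\<epsilon>/3"]) auto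
qed


definition valid :: "nat \<Rightarrow> pt3 \<Rightarrow> pt2 \<Rightarrow> pt2 \<Rightarrow> pt2 \<Rightarrow> bool" where
  "valid i x P0 W1 W2 \<longleftrightarrow> (\<forall>y\<in>cc i x. \<forall>s t. y = v + s *\<^sub>R d1 i + t *\<^sub>R d2 i \<longrightarrow> f y = P0 + s *\<^sub>R W1 + t *\<^sub>R W2)"

lemma validD: "valid i x P0 W1 W2 \<Longrightarrow> y \<in> cc i x \<Longrightarrow> y = v + s *\<^sub>R d1 i + t *\<^sub>R d2 i \<Longrightarrow> f y = P0 + s *\<^sub>R W1 + t *\<^sub>R W2"
  unfolding valid_def by blast

lemma data: assumes "i < k" "x \<in> T i - C"
  shows "\<exists>P0 W1 W2. W1 \<bullet> W1 = d1 i \<bullet> d1 i \<and> W2 \<bullet> W2 = d2 i \<bullet> d2 i \<and> W1 \<bullet> W2 = d1 i \<bullet> d2 i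
     \<and> valid i x P0 W1 W2"
proof -
  obtain u \<delta> where ud: "\<delta> > 0" "u \<in> cc i x" "u + \<delta> *\<^sub>R d1 i \<in> cc i x" "u + \<delta> *\<^sub>R d2 i \<in> cc i x"
    using three[OF assms] by blast
  have isoS: "\<forall>y\<in>cc i x. \<forall>y'\<in>cc i x. dist (f y) (f y') = dist y y'"
    using isocomp[OF assms] by blast
  have "u \<in> T i" using ud(2) connected_component_subset by blast
  then obtain su tu where "0 \<le> su" "0 \<le> tu" "su + tu \<le> 1" and u: "u = v + su *\<^sub>R d1 i + tu *\<^sub>R d2 i"
    by (rule faceE)
  define F1 where "F1 = f (u + \<delta> *\<^sub>R d1 i) - f u"
  define F2 where "F2 = f (u + \<delta> *\<^sub>R d2 i) - f u"
  define W1 where "W1 = inverse \<delta> *\<^sub>R F1"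
  define W2 where "W2 = inverse \<delta> *\<^sub>R F2"
  define P0 where "P0 = f u - su *\<^sub>R W1 - tu *\<^sub>R W2"
  have g11: "F1 \<bullet> F1 = (\<delta> *\<^sub>R d1 i) \<bullet> (\<delta> *\<^sub>R d1 i)"
    using polar[OF isoS ud(3) ud(3) ud(2)] by (simp add: F1_def)
  have g22: "F2 \<bullet> F2 = (\<delta> *\<^sub>R d2 i) \<bullet> (\<delta> *\<^sub>R d2 i)"
    using polar[OF isoS ud(4) ud(4) ud(2)] by (simp add: F2_def)
  have g12: "F1 \<bullet> F2 = (\<delta> *\<^sub>R d1 i) \<bullet> (\<delta> *\<^sub>R d2 i)"
    using polar[OF isoS ud(3) ud(4) ud(2)] by (simp add: F1_def F2_def)
  have va: "valid i x P0 W1 W2"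
    unfolding valid_def
  proof (intro ballI allI impI)
    fix y s t assume y: "y \<in> cc i x" and yst: "y = v + s *\<^sub>R d1 i + t *\<^sub>R d2 i"
    have c1: "((s - su)/\<delta>) *\<^sub>R (\<delta> *\<^sub>R d1 i) = (s - su) *\<^sub>R d1 i" using ud(1) by simp
    have c2: "((t - tu)/\<delta>) *\<^sub>R (\<delta> *\<^sub>R d2 i) = (t - tu) *\<^sub>R d2 i" using ud(1) by simp
    have ye: "y = u + ((s - su)/\<delta>) *\<^sub>R (\<delta> *\<^sub>R d1 i) + ((t - tu)/\<delta>) *\<^sub>R (\<delta> *\<^sub>R d2 i)"
      unfolding c1 c2 yst u by (simp add: algebra_simps)
    have "f y = f u + ((s - su)/\<delta>) *\<^sub>R F1 + ((t - tu)/\<delta>) *\<^sub>R F2"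
      unfolding F1_def F2_def by (rule ext_iso[OF isoS ud(2) ud(3) ud(4) y ye])
    also have "((s - su)/\<delta>) *\<^sub>R F1 = (s - su) *\<^sub>R W1" by (simp add: W1_def divide_inverse)
    also have "((t - tu)/\<delta>) *\<^sub>R F2 = (t - tu) *\<^sub>R W2" by (simp add: W2_def divide_inverse)
    finally show "f y = P0 + s *\<^sub>R W1 + t *\<^sub>R W2" by (simp add: P0_def algebra_simps)
  qed
  have g11': "F1 \<bullet> F1 = \<delta> * (\<delta> * (d1 i \<bullet> d1 i))" using g11 by (simp only: inner_scaleR_left inner_scaleR_right)
  have g22': "F2 \<bullet> F2 = \<delta> * (\<delta> * (d2 i \<bullet> d2 i))" using g22 by (simp only: inner_scaleR_left inner_scaleR_right)
  have g12': "F1 \<bullet> F2 = \<delta> * (\<delta> * (d1 i \<bullet> d2 i))" using g12 by (simp only: inner_scaleR_left inner_scaleR_right)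
  have "W1 \<bullet> W1 = inverse \<delta> * (inverse \<delta> * (F1 \<bullet> F1))" "W2 \<bullet> W2 = inverse \<delta> * (inverse \<delta> * (F2 \<bullet> F2))"
    "W1 \<bullet> W2 = inverse \<delta> * (inverse \<delta> * (F1 \<bullet> F2))"
    unfolding W1_def W2_def by (simp_all only: inner_scaleR_left inner_scaleR_right)
  then have gr: "W1 \<bullet> W1 = d1 i \<bullet> d1 i" "W2 \<bullet> W2 = d2 i \<bullet> d2 i" "W1 \<bullet> W2 = d1 i \<bullet> d2 i"
    unfolding g11' g22' g12' using ud(1) by (simp_all add: field_simps)
  show ?thesis using va gr by blast
qed

lemma uniq: assumes "i < k" "x \<in> T i - C" "valid i x P0 W1 W2" "valid i x Q0 V1 V2"
  shows "P0 = Q0"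
proof -
  obtain u \<delta> where ud: "\<delta> > 0" "u \<in> cc i x" "u + \<delta> *\<^sub>R d1 i \<in> cc i x" "u + \<delta> *\<^sub>R d2 i \<in> cc i x"
    using three[OF assms(1,2)] by blast
  have "u \<in> T i" using ud(2) connected_component_subset by blast
  then obtain su tu where "0 \<le> su" "0 \<le> tu" "su + tu \<le> 1" and u: "u = v + su *\<^sub>R d1 i + tu *\<^sub>R d2 i"
    by (rule faceE)
  have u1: "u + \<delta> *\<^sub>R d1 i = v + (su + \<delta>) *\<^sub>R d1 i + tu *\<^sub>R d2 i" unfolding u by (simp add: algebra_simps)
  have u2: "u + \<delta> *\<^sub>R d2 i = v + su *\<^sub>R d1 i + (tu + \<delta>) *\<^sub>R d2 i" unfolding u by (simp add: algebra_simps)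
  have e0: "P0 + su *\<^sub>R W1 + tu *\<^sub>R W2 = Q0 + su *\<^sub>R V1 + tu *\<^sub>R V2"
    using validD[OF assms(3) ud(2) u] validD[OF assms(4) ud(2) u] by (rule trans[OF sym])
  have e1: "P0 + (su + \<delta>) *\<^sub>R W1 + tu *\<^sub>R W2 = Q0 + (su + \<delta>) *\<^sub>R V1 + tu *\<^sub>R V2"
    using validD[OF assms(3) ud(3) u1] validD[OF assms(4) ud(3) u1] by (rule trans[OF sym])
  have e2: "P0 + su *\<^sub>R W1 + (tu + \<delta>) *\<^sub>R W2 = Q0 + su *\<^sub>R V1 + (tu + \<delta>) *\<^sub>R V2"
    using validD[OF assms(3) ud(4) u2] validD[OF assms(4) ud(4) u2] by (rule trans[OF sym])
  have "P0 + su *\<^sub>R W1 + tu *\<^sub>R W2 + \<delta> *\<^sub>R W1 = Q0 + su *\<^sub>R V1 + tu *\<^sub>R V2 + \<delta> *\<^sub>R V1"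
    using e1 by (simp add: algebra_simps)
  then have "Q0 + su *\<^sub>R V1 + tu *\<^sub>R V2 + \<delta> *\<^sub>R W1 = Q0 + su *\<^sub>R V1 + tu *\<^sub>R V2 + \<delta> *\<^sub>R V1"
    by (simp only: e0)
  then have "\<delta> *\<^sub>R W1 = \<delta> *\<^sub>R V1" by (simp only: add_left_cancel)
  then have w1: "W1 = V1" using ud(1) by simp
  have "P0 + su *\<^sub>R W1 + tu *\<^sub>R W2 + \<delta> *\<^sub>R W2 = Q0 + su *\<^sub>R V1 + tu *\<^sub>R V2 + \<delta> *\<^sub>R V2"
    using e2 by (simp add: algebra_simps)
  then have "Q0 + su *\<^sub>R V1 + tu *\<^sub>R V2 + \<delta> *\<^sub>R W2 = Q0 + su *\<^sub>R V1 + tu *\<^sub>R V2 + \<delta> *\<^sub>R V2"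
    by (simp only: e0)
  then have "\<delta> *\<^sub>R W2 = \<delta> *\<^sub>R V2" by (simp only: add_left_cancel)
  then have w2: "W2 = V2" using ud(1) by simp
  show ?thesis using e0 w1 w2 by simp
qed

lemma line: assumes "valid i x P0 W1 W2" "w = a i \<or> w = b i"
  shows "\<exists>A. \<forall>\<mu>. v + \<mu> *\<^sub>R (w - v) \<in> cc i x \<longrightarrow> f (v + \<mu> *\<^sub>R (w - v)) = P0 + \<mu> *\<^sub>R A"
  using assms(2)
proof
  assume w: "w = a i"
  show ?thesis
  proof (intro exI allI impI)
    fix \<mu> assume h: "v + \<mu> *\<^sub>R (w - v) \<in> cc i x"
    have "v + \<mu> *\<^sub>R (w - v) = v + \<mu> *\<^sub>R d1 i + 0 *\<^sub>R d2 i" using w by simp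
    from validD[OF assms(1) h this] show "f (v + \<mu> *\<^sub>R (w - v)) = P0 + \<mu> *\<^sub>R W1"
      by simp
  qed
next
  assume w: "w = b i"
  show ?thesis
  proof (intro exI allI impI)
    fix \<mu> assume h: "v + \<mu> *\<^sub>R (w - v) \<in> cc i x"
    have "v + \<mu> *\<^sub>R (w - v) = v + 0 *\<^sub>R d1 i + \<mu> *\<^sub>R d2 i" using w by simp
    from validD[OF assms(1) h this] show "f (v + \<mu> *\<^sub>R (w - v)) = P0 + \<mu> *\<^sub>R W2"
      by simp
  qed
qed

lemma at_v: assumes "valid i v P0 W1 W2" "v \<in> T i - C" shows "f v = P0"
proof -
  have h: "v \<in> cc i v" using assms(2) by simp
  have "v = v + 0 *\<^sub>R d1 i + 0 *\<^sub>R d2 i" by simp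
  from validD[OF assms(1) h this] show ?thesis by simp
qed

lemma inter_seg: assumes "i < k" "j < k" "i \<noteq> j"
  shows "T i \<inter> T j = {v} \<or> (\<exists>w. T i \<inter> T j = closed_segment v w \<and> (w = a i \<or> w = b i) \<and> (w = a j \<or> w = b j))"
proof -
  have I: "T i \<inter> T j = (if j = Suc i mod k then closed_segment v (a j)
                      else if i = Suc j mod k then closed_segment v (a i) else {v})"
    using inter assms by blast
  show ?thesis
  proof (cases "j = Suc i mod k")
    case True then show ?thesis using I by auto
  next
    case False
    then show ?thesis using I by (cases "i = Suc j mod k") auto
  qed
qed

lemma edge: assumes "i < k" "j < k" "i \<noteq> j" "x \<in> T i - C" "x \<in> T j"
    "valid i x P0 W1 W2" "valid j x Q0 V1 V2"
  shows "P0 = Q0"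
proof -
  have xj: "x \<in> T j - C" using assms(4,5) by simp
  show ?thesis
  proof (cases "x = v")
    case True
    have "f v = P0" using at_v[of i P0 W1 W2] assms(4,6) True by simp
    moreover have "f v = Q0" using at_v[of j Q0 V1 V2] xj assms(7) True by simp
    ultimately show ?thesis by simp
  next
    case False
    have "x \<in> T i \<inter> T j" using assms(4,5) by simp
    with inter_seg[OF assms(1,2,3)] False obtain w where
      w: "T i \<inter> T j = closed_segment v w" "w = a i \<or> w = b i" "w = a j \<or> w = b j" by auto
    obtain A where A: "\<forall>\<mu>. v + \<mu> *\<^sub>R (w - v) \<in> cc i x \<longrightarrow> f (v + \<mu> *\<^sub>R (w - v)) = P0 + \<mu> *\<^sub>R A"
      using line[OF assms(6) w(2)] by blast
    obtain B where B: "\<forall>\<mu>. v + \<mu> *\<^sub>R (w - v) \<in> cc j x \<longrightarrow> f (v + \<mu> *\<^sub>R (w - v)) = Q0 + \<mu> *\<^sub>R B"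
      using line[OF assms(7) w(3)] by blast
    obtain r1 where r1: "r1 > 0" "ball x r1 \<inter> T i \<subseteq> cc i x" using ballcomp[OF assms(4)] by blast
    obtain r2 where r2: "r2 > 0" "ball x r2 \<inter> T j \<subseteq> cc j x" using ballcomp[OF xj] by blast
    have "x \<in> closed_segment v w" using w(1) \<open>x \<in> T i \<inter> T j\<close> by blast
    then obtain lm where l: "0 \<le> lm" "lm \<le> 1" "x = (1 - lm) *\<^sub>R v + lm *\<^sub>R w"
      unfolding closed_segment_def by blast
    have xl: "x = v + lm *\<^sub>R (w - v)" using l(3) by (simp add: algebra_simps)
    have lpos: "lm > 0" using False xl l(1) by (cases "lm = 0") auto
    define r where "r = min r1 r2"
    define \<eta> where "\<eta> = min (1/2) (r / (2 * (lm * norm (w - v) + 1)))"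
    have eta: "\<eta> > 0" using r1 r2 lpos by (auto simp: \<eta>_def r_def intro!: divide_pos_pos add_nonneg_pos)
    have eta': "\<eta> \<le> 1/2" unfolding \<eta>_def by (rule min.cobounded1)
    have eta2: "\<eta> * (lm * norm (w - v)) < r"
    proof -
      have X: "lm * norm (w - v) + 1 > 0" using lpos by (simp add: add_nonneg_pos)
      have "\<eta> \<le> r / (2 * (lm * norm (w - v) + 1))" unfolding \<eta>_def by (rule min.cobounded2)
      then have "\<eta> * (2 * (lm * norm (w - v) + 1)) \<le> r" using X by (subst (asm) pos_le_divide_eq) auto
      then have "\<eta> * (lm * norm (w - v) + 1) \<le> r/2" by (simp add: algebra_simps)
      moreover have "r > 0" using r1 r2 by (simp add: r_def)
      ultimately show ?thesis using eta by (simp add: algebra_simps)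
    qed
    note eta = eta eta'
    define lm' where "lm' = lm * (1 - \<eta>)"
    define x' where "x' = v + lm' *\<^sub>R (w - v)"
    have l': "0 \<le> lm'" "lm' \<le> 1" "lm' \<noteq> lm" using l lpos eta
      by (auto simp: lm'_def mult_le_one)
    have "x' \<in> closed_segment v w" unfolding closed_segment_def x'_def
      using l' by (intro CollectI exI[of _ lm']) (auto simp: algebra_simps)
    then have x'T: "x' \<in> T i" "x' \<in> T j" using w(1) by auto
    have dx: "x - x' = (\<eta> * lm) *\<^sub>R (w - v)"
      unfolding xl x'_def lm'_def by (simp add: algebra_simps)
    have "dist x x' = \<eta> * (lm * norm (w - v))"
      unfolding dist_norm dx using lpos eta by (simp add: abs_mult)
    then have "dist x x' < r" using eta2 by simp
    then have x'b: "x' \<in> ball x r1" "x' \<in> ball x r2" by (auto simp: r_def)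
    have x'c: "x' \<in> cc i x" "x' \<in> cc j x" using x'b x'T r1 r2 by auto
    have xc: "x \<in> cc i x" "x \<in> cc j x" using assms(4) xj by auto
    have "f x = P0 + lm *\<^sub>R A" using A[rule_format, of lm, folded xl] xc(1) by blast
    moreover have "f x = Q0 + lm *\<^sub>R B" using B[rule_format, of lm, folded xl] xc(2) by blast
    ultimately have e1: "P0 + lm *\<^sub>R A = Q0 + lm *\<^sub>R B" by simp
    have "f x' = P0 + lm' *\<^sub>R A" using A[rule_format, of lm', folded x'_def] x'c(1) by blast
    moreover have "f x' = Q0 + lm' *\<^sub>R B" using B[rule_format, of lm', folded x'_def] x'c(2) by blast
    ultimately have e2: "P0 + lm' *\<^sub>R A = Q0 + lm' *\<^sub>R B" by simp
    have "(P0 + lm *\<^sub>R A) - (P0 + lm' *\<^sub>R A) = (Q0 + lm *\<^sub>R B) - (Q0 + lm' *\<^sub>R B)"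
      by (simp only: e1 e2)
    then have "(lm - lm') *\<^sub>R A = (lm - lm') *\<^sub>R B" by (simp add: scaleR_diff_left)
    then have "A = B" using l' by simp
    then show ?thesis using e1 by simp
  qed
qed

definition fc :: "pt3 \<Rightarrow> nat" where "fc x = (SOME i. i < k \<and> x \<in> T i)"
definition apex :: "pt3 \<Rightarrow> pt2" where "apex x = (SOME P0. \<exists>W1 W2. valid (fc x) x P0 W1 W2)"

lemma apex_eq: assumes "i < k" "x \<in> T i - C" "valid i x P0 W1 W2" shows "apex x = P0"
proof -
  have "\<exists>i. i < k \<and> x \<in> T i" using assms by blast
  then have "fc x < k \<and> x \<in> T (fc x)" unfolding fc_def by (rule someI_ex)
  then have fc: "fc x < k" "x \<in> T (fc x)" by auto
  have xf: "x \<in> T (fc x) - C" using fc assms(2) by simp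
  have "\<exists>P0 W1 W2. valid (fc x) x P0 W1 W2" using data[OF fc(1) xf] by blast
  then have "\<exists>W1 W2. valid (fc x) x (apex x) W1 W2" unfolding apex_def by (rule someI_ex)
  then obtain W1' W2' where va: "valid (fc x) x (apex x) W1' W2'" by blast
  show ?thesis
  proof (cases "fc x = i")
    case True
    have "P0 = apex x" by (rule uniq[OF assms(1,2,3)]) (use va True in simp)
    then show ?thesis by simp
  next
    case False
    have "P0 = apex x" by (rule edge[OF assms(1) fc(1) _ assms(2) fc(2) assms(3) va]) (use False in auto)
    then show ?thesis by simp
  qed
qed

lemma apex_const: assumes "x \<in> PP - C" "y \<in> PP - C" shows "apex x = apex y"
proof (rule connected_local_const[OF conn assms])
  show "\<forall>x\<in>PP - C. \<forall>\<^sub>F y in at x within PP - C. apex x = apex y"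
  proof
    fix x assume x: "x \<in> PP - C"
    have ev1: "\<forall>j\<in>{..<k}. \<forall>\<^sub>F y in nhds x. y \<in> T j \<longrightarrow> x \<in> T j \<and> y \<in> cc j x"
    proof
      fix j assume j: "j \<in> {..<k}"
      show "\<forall>\<^sub>F y in nhds x. y \<in> T j \<longrightarrow> x \<in> T j \<and> y \<in> cc j x"
      proof (cases "x \<in> T j")
        case True
        then obtain r where r: "r > 0" "ball x r \<inter> T j \<subseteq> cc j x" using ballcomp[of x j] x by auto
        have "\<forall>\<^sub>F y in nhds x. y \<in> ball x r" using r by (intro eventually_nhds_in_open) auto
        then show ?thesis by eventually_elim (use True r in auto)
      next
        case False
        have "\<forall>\<^sub>F y in nhds x. y \<in> - T j" using False T_closed by (intro eventually_nhds_in_open) auto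
        then show ?thesis by eventually_elim auto
      qed
    qed
    have "\<forall>\<^sub>F y in nhds x. \<forall>j\<in>{..<k}. y \<in> T j \<longrightarrow> x \<in> T j \<and> y \<in> cc j x"
      by (rule eventually_ball_finite) (use ev1 in auto)
    then show "\<forall>\<^sub>F y in at x within PP - C. apex x = apex y"
      unfolding eventually_at_filter
    proof eventually_elim
      case (elim y)
      show ?case
      proof (intro impI)
        assume "y \<in> PP - C"
        then obtain j where j: "j < k" "y \<in> T j" "y \<notin> C" by auto
        then have xj: "x \<in> T j" and yc: "y \<in> cc j x" using elim by auto
        have xjc: "x \<in> T j - C" using xj x by simp
        obtain P0 W1 W2 where va: "valid j x P0 W1 W2" using data[OF j(1) xjc] by blast
        have "cc j y = cc j x" using yc connected_component_eq by blast
        then have vy: "valid j y P0 W1 W2" using va unfolding valid_def by simp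
        have "apex x = P0" using apex_eq[OF j(1) xjc va] .
        moreover have "apex y = P0" using apex_eq[OF j(1) _ vy] j by simp
        ultimately show "apex x = apex y" by simp
      qed
    qed
  qed
qed

end



lemma quad_roots_finite:
  fixes A B Cc :: real assumes "A \<noteq> 0"
  shows "finite {u. A * u\<^sup>2 + B * u + Cc = 0}"
proof -
  define \<Delta> where "\<Delta> = B\<^sup>2 - 4 * A * Cc"
  have "{u. A * u\<^sup>2 + B * u + Cc = 0} \<subseteq> {(- B + sqrt \<Delta>) / (2 * A), (- B - sqrt \<Delta>) / (2 * A)}"
  proof
    fix u assume "u \<in> {u. A * u\<^sup>2 + B * u + Cc = 0}"
    then have eq: "A * u\<^sup>2 + B * u + Cc = 0" by simp
    have sq: "(2 * A * u + B)\<^sup>2 = \<Delta>"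
    proof -
      have "(2 * A * u + B)\<^sup>2 = 4 * A * (A * u\<^sup>2 + B * u + Cc) + B\<^sup>2 - 4 * A * Cc"
        by (simp add: power2_eq_square algebra_simps)
      then show ?thesis using eq by (simp add: \<Delta>_def)
    qed
    have "sqrt \<Delta> = \<bar>2 * A * u + B\<bar>" using sq real_sqrt_abs by metis
    then have "2 * A * u + B = sqrt \<Delta> \<or> 2 * A * u + B = - sqrt \<Delta>" by linarith
    then show "u \<in> {(- B + sqrt \<Delta>) / (2 * A), (- B - sqrt \<Delta>) / (2 * A)}"
      using assms by (auto simp: field_simps)
  qed
  then show ?thesis by (rule finite_subset) simp
qed

lemma seg_sphere_finite:
  fixes p q c :: "'a::real_inner"
  shows "finite (closed_segment p q \<inter> sphere c r)"
proof (cases "p = q")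
  case True then show ?thesis by simp
next
  case False
  define A where "A = (q - p) \<bullet> (q - p)"
  define B where "B = 2 * ((p - c) \<bullet> (q - p))"
  define Cc where "Cc = (p - c) \<bullet> (p - c) - r\<^sup>2"
  have A: "A \<noteq> 0" using False by (simp add: A_def)
  have "closed_segment p q \<inter> sphere c r \<subseteq> (\<lambda>u. p + u *\<^sub>R (q - p)) ` {u. A * u\<^sup>2 + B * u + Cc = 0}"
  proof
    fix y assume y: "y \<in> closed_segment p q \<inter> sphere c r"
    then obtain u where u: "y = (1 - u) *\<^sub>R p + u *\<^sub>R q" unfolding closed_segment_def by blast
    have yu: "y = p + u *\<^sub>R (q - p)" using u by (simp add: algebra_simps)
    have "norm (y - c) = r" using y by (simp add: dist_norm norm_minus_commute)
    then have "(y - c) \<bullet> (y - c) = r\<^sup>2" by (simp add: dot_square_norm)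
    moreover have "y - c = (p - c) + u *\<^sub>R (q - p)" using yu by simp
    ultimately have "((p - c) + u *\<^sub>R (q - p)) \<bullet> ((p - c) + u *\<^sub>R (q - p)) = r\<^sup>2" by simp
    then have "(p - c) \<bullet> (p - c) + 2 * u * ((p - c) \<bullet> (q - p)) + u\<^sup>2 * ((q - p) \<bullet> (q - p)) = r\<^sup>2"
      by (simp add: inner_add_left inner_add_right inner_commute power2_eq_square algebra_simps)
    then have "A * u\<^sup>2 + B * u + Cc = 0" by (simp add: A_def B_def Cc_def algebra_simps)
    then show "y \<in> (\<lambda>u. p + u *\<^sub>R (q - p)) ` {u. A * u\<^sup>2 + B * u + Cc = 0}" using yu by blast
  qed
  moreover have "finite ((\<lambda>u. p + u *\<^sub>R (q - p)) ` {u. A * u\<^sup>2 + B * u + Cc = 0})"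
    using quad_roots_finite[OF A] by simp
  ultimately show ?thesis by (rule finite_subset)
qed

definition circ :: "real \<Rightarrow> pt2" where "circ \<theta> = vector [cos \<theta>, sin \<theta>]"

lemma circ_eq: "circ x = circ y \<longleftrightarrow> (\<exists>j::int. x = y + 2 * pi * j)"
proof -
  have "circ x = circ y \<longleftrightarrow> sin x = sin y \<and> cos x = cos y"
    by (auto simp: circ_def vec_eq_iff forall_2 vector_2)
  also have "\<dots> \<longleftrightarrow> (\<exists>j::int. x = y + 2 * pi * j)" by (rule sin_cos_eq_iff)
  finally show ?thesis .
qed

lemma inner2: "(x::pt2) \<bullet> y = x$1 * y$1 + x$2 * y$2"
  by (simp add: inner_vec_def sum_2)

lemma ON2:
  fixes E1 E2 :: pt2
  assumes "E1 \<bullet> E1 = 1" "E2 \<bullet> E2 = 1" "E1 \<bullet> E2 = 0"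
  shows "\<exists>\<theta> \<sigma>. (\<sigma> = 1 \<or> \<sigma> = -1) \<and> (\<forall>t. cos t *\<^sub>R E1 + sin t *\<^sub>R E2 = circ (\<theta> + \<sigma> * t))"
proof -
  have "(E1$1)\<^sup>2 + (E1$2)\<^sup>2 = 1" using assms(1) by (simp add: inner2 power2_eq_square)
  then obtain \<theta> where th: "E1$1 = cos \<theta>" "E1$2 = sin \<theta>" using sincos_total_2pi by metis
  define w where "w = - sin \<theta> * E2$1 + cos \<theta> * E2$2"
  have o: "cos \<theta> * E2$1 + sin \<theta> * E2$2 = 0" using assms(3) th by (simp add: inner2)
  have n2: "(E2$1)\<^sup>2 + (E2$2)\<^sup>2 = 1" using assms(2) by (simp add: inner2 power2_eq_square)
  have sc: "(sin \<theta>)\<^sup>2 + (cos \<theta>)\<^sup>2 = 1" by simp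
  have e21: "E2$1 = - w * sin \<theta>" using o sc unfolding w_def by algebra
  have e22: "E2$2 = w * cos \<theta>" using o sc unfolding w_def by algebra
  have "w\<^sup>2 = 1" using n2 sc unfolding e21 e22 by algebra
  then have w: "w = 1 \<or> w = -1" by (simp add: power2_eq_1_iff)
  have "\<forall>t. cos t *\<^sub>R E1 + sin t *\<^sub>R E2 = circ (\<theta> + w * t)"
  proof
    fix t
    have c1: "(cos t *\<^sub>R E1 + sin t *\<^sub>R E2)$1 = cos t * cos \<theta> - w * sin t * sin \<theta>"
      using th e21 by simp
    have c2: "(cos t *\<^sub>R E1 + sin t *\<^sub>R E2)$2 = cos t * sin \<theta> + w * sin t * cos \<theta>"
      using th e22 by simp
    have "cos (\<theta> + w * t) = cos t * cos \<theta> - w * sin t * sin \<theta> \<and> sin (\<theta> + w * t) = cos t * sin \<theta> + w * sin t * cos \<theta>"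
      using w by (auto simp: cos_add sin_add cos_diff sin_diff algebra_simps)
    then show "cos t *\<^sub>R E1 + sin t *\<^sub>R E2 = circ (\<theta> + w * t)"
      using c1 c2 by (simp add: circ_def vec_eq_iff forall_2 vector_2)
  qed
  then show ?thesis using w by blast
qed

lemma grid_iff:
  fixes M :: nat assumes M: "M > 0"
  shows "(\<exists>n<M. \<exists>j::int. y = 2 * pi * n / M + 2 * pi * j) \<longleftrightarrow> (\<exists>m::int. y = m * (2 * pi / M))"
proof
  assume "\<exists>n<M. \<exists>j::int. y = 2 * pi * n / M + 2 * pi * j"
  then obtain n and j :: int where "n < M" "y = 2 * pi * n / M + 2 * pi * j" by blast
  then have "y = real_of_int (int n + j * int M) * (2 * pi / M)" using M by (simp add: field_simps)
  then show "\<exists>m::int. y = m * (2 * pi / M)" by (rule exI[where x="int n + j * int M"])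
next
  assume "\<exists>m::int. y = m * (2 * pi / M)"
  then obtain m :: int where m: "y = m * (2 * pi / M)" by blast
  define n where "n = nat (m mod int M)"
  define j where "j = m div int M"
  have nm: "int n = m mod int M" using M by (simp add: n_def)
  have "n < M" using M unfolding n_def by (simp add: nat_less_iff)
  moreover have "m = int n + j * int M" unfolding nm j_def by simp
  then have "real_of_int m = real n + real_of_int j * real M" by (metis of_int_add of_int_mult of_int_of_nat_eq)
  then have "y = 2 * pi * n / M + 2 * pi * j" using M m by (simp add: field_simps)
  ultimately show "\<exists>n<M. \<exists>j::int. y = 2 * pi * n / M + 2 * pi * j" by blast
qed




lemma inner_two:
  fixes x y :: "'a::real_inner"
  shows "(\<alpha> *\<^sub>R x + \<beta> *\<^sub>R y) \<bullet> (\<alpha> *\<^sub>R x + \<beta> *\<^sub>R y) = \<alpha>\<^sup>2 * (x \<bullet> x) + 2 * (\<alpha> * \<beta>) * (x \<bullet> y) + \<beta>\<^sup>2 * (y \<bullet> y)"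
  by (simp add: inner_add_left inner_add_right inner_commute[of y x] power2_eq_square algebra_simps)

context pconf begin

definition al :: "nat \<Rightarrow> real" where "al i = vangle (d1 i) (d2 i)"

lemma nz: assumes "i < k" shows "d1 i \<noteq> 0" "d2 i \<noteq> 0"
  using ncol[OF assms] by (auto simp: collinear_lemma)

lemma ang: assumes "i < k"
  shows "0 < al i" "al i < pi" "cos (al i) = (d1 i \<bullet> d2 i) / (norm (d1 i) * norm (d2 i))"
    "sin (al i) > 0"
proof -
  define y where "y = (d1 i \<bullet> d2 i) / (norm (d1 i) * norm (d2 i))"
  have np: "norm (d1 i) * norm (d2 i) > 0" using nz[OF assms] by simp
  have "\<bar>d1 i \<bullet> d2 i\<bar> \<le> norm (d1 i) * norm (d2 i)" by (rule Cauchy_Schwarz_ineq2)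
  moreover have "\<bar>d1 i \<bullet> d2 i\<bar> \<noteq> norm (d1 i) * norm (d2 i)"
  proof
    assume "\<bar>d1 i \<bullet> d2 i\<bar> = norm (d1 i) * norm (d2 i)"
    then have "collinear {0, d1 i, d2 i}" by (simp only: norm_cauchy_schwarz_equal)
    then show False using ncol[OF assms] by contradiction
  qed
  ultimately have lt: "\<bar>d1 i \<bullet> d2 i\<bar> < norm (d1 i) * norm (d2 i)" by linarith
  have "\<bar>y\<bar> = \<bar>d1 i \<bullet> d2 i\<bar> / (norm (d1 i) * norm (d2 i))"
    unfolding y_def abs_divide using np by simp
  also have "\<dots> < 1" using lt np by (simp only: divide_less_eq_1_pos)
  finally have "\<bar>y\<bar> < 1" .
  then have y1: "-1 < y" "y < 1" by auto
  have al: "al i = arccos y" by (simp add: al_def vangle_def y_def)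
  have b: "0 < arccos y" "arccos y < pi" using arccos_lt_bounded[OF y1] by simp_all
  show "0 < al i" "al i < pi" unfolding al using b by simp_all
  have "cos (arccos y) = y" by (rule cos_arccos) (use y1 in linarith)+
  then show "cos (al i) = (d1 i \<bullet> d2 i) / (norm (d1 i) * norm (d2 i))"
    unfolding al y_def .
  show "sin (al i) > 0" unfolding al by (rule sin_gt_zero[OF b])
qed

definition rho :: real where
  "rho = Min ((\<lambda>i. sin (al i) * min (norm (d1 i)) (norm (d2 i)) / 2) ` {..<k})"

lemma rho: "rho > 0" "\<And>i. i < k \<Longrightarrow> rho \<le> sin (al i) * min (norm (d1 i)) (norm (d2 i)) / 2"
proof -
  have "0 \<in> {..<k}" using k3 by simp
  then have k: "{..<k} \<noteq> {}" by blast
  have "\<forall>i\<in>{..<k}. sin (al i) * min (norm (d1 i)) (norm (d2 i)) / 2 > 0"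
  proof
    fix i assume "i \<in> {..<k}"
    then have i: "i < k" by simp
    have "min (norm (d1 i)) (norm (d2 i)) > 0" using nz[OF i] by simp
    then show "sin (al i) * min (norm (d1 i)) (norm (d2 i)) / 2 > 0" using ang(4)[OF i] by simp
  qed
  then show "rho > 0" unfolding rho_def using k by (subst Min_gr_iff) auto
  show "\<And>i. i < k \<Longrightarrow> rho \<le> sin (al i) * min (norm (d1 i)) (norm (d2 i)) / 2"
    unfolding rho_def by (rule Min_le) auto
qed

definition c1 :: "nat \<Rightarrow> real \<Rightarrow> real" where
  "c1 i t = rho * sin (al i - t) / (sin (al i) * norm (d1 i))"
definition c2 :: "nat \<Rightarrow> real \<Rightarrow> real" where
  "c2 i t = rho * sin t / (sin (al i) * norm (d2 i))"
definition xa :: "nat \<Rightarrow> real \<Rightarrow> pt3" where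
  "xa i t = v + c1 i t *\<^sub>R d1 i + c2 i t *\<^sub>R d2 i"

lemma c_bounds: assumes "i < k" "0 \<le> t" "t \<le> al i"
  shows "0 \<le> c1 i t" "c1 i t \<le> 1/2" "0 \<le> c2 i t" "c2 i t \<le> 1/2"
proof -
  have S: "sin (al i) > 0" using ang(4)[OF assms(1)] .
  have n1: "norm (d1 i) > 0" "norm (d2 i) > 0" using nz[OF assms(1)] by auto
  have r: "rho > 0" "rho \<le> sin (al i) * min (norm (d1 i)) (norm (d2 i)) / 2" using rho assms(1) by auto
  have s1: "0 \<le> sin (al i - t)" "sin (al i - t) \<le> 1"
    using assms ang(2)[OF assms(1)] by (auto intro: sin_ge_zero)
  have s2: "0 \<le> sin t" "sin t \<le> 1"
    using assms ang(2)[OF assms(1)] by (auto intro: sin_ge_zero)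
  show "0 \<le> c1 i t" "0 \<le> c2 i t" unfolding c1_def c2_def using S n1 r s1 s2 by auto
  have "rho * sin (al i - t) \<le> rho" using r s1 by (simp add: mult_left_le)
  also have "\<dots> \<le> sin (al i) * norm (d1 i) / 2"
    using r S by (smt (verit) mult_left_mono min.cobounded1 divide_right_mono)
  finally show "c1 i t \<le> 1/2" unfolding c1_def using S n1 by (simp add: divide_le_eq)
  have "rho * sin t \<le> rho" using r s2 by (simp add: mult_left_le)
  also have "\<dots> \<le> sin (al i) * norm (d2 i) / 2"
    using r S by (smt (verit) mult_left_mono min.cobounded2 divide_right_mono)
  finally show "c2 i t \<le> 1/2" unfolding c2_def using S n1 by (simp add: divide_le_eq)
qed

lemma arcT: assumes "i < k" "0 \<le> t" "t \<le> al i" shows "xa i t \<in> T i"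
proof -
  note cb = c_bounds[OF assms]
  show ?thesis unfolding xa_def by (rule faceI) (use cb in linarith)+
qed

lemma arcpos: assumes "i < k" "0 < t" "t < al i" shows "c1 i t > 0" "c2 i t > 0"
proof -
  have S: "sin (al i) > 0" using ang(4)[OF assms(1)] .
  have n1: "norm (d1 i) > 0" "norm (d2 i) > 0" using nz[OF assms(1)] by auto
  have "sin (al i - t) > 0" "sin t > 0" using assms ang(2)[OF assms(1)] by (auto intro!: sin_gt_zero)
  then show "c1 i t > 0" "c2 i t > 0" unfolding c1_def c2_def using S n1 rho(1) by auto
qed

lemma arcnorm: assumes "i < k" shows "norm (xa i t - v) = rho"
proof -
  define S where "S = sin (al i)"
  define Co where "Co = cos (al i)"
  define X where "X = sin (al i - t)"
  have S: "S > 0" using ang(4)[OF assms] by (simp add: S_def)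
  have n1: "norm (d1 i) > 0" "norm (d2 i) > 0" using nz[OF assms] by auto
  have d12: "d1 i \<bullet> d2 i = Co * norm (d1 i) * norm (d2 i)"
    using ang(3)[OF assms] n1 by (simp add: Co_def field_simps)
  define p1 where "p1 = c1 i t * norm (d1 i)"
  define p2 where "p2 = c2 i t * norm (d2 i)"
  have p1: "p1 = (rho / S) * X" unfolding p1_def c1_def X_def S_def using n1 S by (simp add: S_def field_simps)
  have p2: "p2 = (rho / S) * sin t" unfolding p2_def c2_def S_def using n1 S by (simp add: S_def field_simps)
  have "(norm (xa i t - v))\<^sup>2 = (c1 i t *\<^sub>R d1 i + c2 i t *\<^sub>R d2 i) \<bullet> (c1 i t *\<^sub>R d1 i + c2 i t *\<^sub>R d2 i)"
    by (simp add: xa_def dot_square_norm)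
  also have "\<dots> = (c1 i t)\<^sup>2 * (d1 i \<bullet> d1 i) + 2 * (c1 i t * c2 i t) * (d1 i \<bullet> d2 i) + (c2 i t)\<^sup>2 * (d2 i \<bullet> d2 i)"
    by (rule inner_two)
  also have "\<dots> = p1\<^sup>2 + 2 * p1 * p2 * Co + p2\<^sup>2"
    unfolding d12 p1_def p2_def dot_square_norm by (simp add: power2_eq_square algebra_simps)
  also have "\<dots> = (rho / S)\<^sup>2 * (X\<^sup>2 + 2 * X * sin t * Co + (sin t)\<^sup>2)"
    unfolding p1 p2 by (simp add: power2_eq_square algebra_simps)
  also have "X\<^sup>2 + 2 * X * sin t * Co + (sin t)\<^sup>2 = S\<^sup>2"
  proof -
    have Xe: "X = S * cos t - Co * sin t" by (simp add: X_def S_def Co_def sin_diff)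
    have "S\<^sup>2 + Co\<^sup>2 = 1" by (simp add: S_def Co_def)
    moreover have "(sin t)\<^sup>2 + (cos t)\<^sup>2 = 1" by simp
    ultimately show ?thesis unfolding Xe by algebra
  qed
  also have "(rho / S)\<^sup>2 * S\<^sup>2 = rho\<^sup>2" using S by (simp add: field_simps)
  finally have "(norm (xa i t - v))\<^sup>2 = rho\<^sup>2" .
  then show ?thesis using rho(1) by (simp add: power2_eq_iff_nonneg)
qed

lemma arcinj: assumes "i < k" "0 \<le> t" "t \<le> al i" "0 \<le> t'" "t' \<le> al i" "xa i t = xa i t'"
  shows "t = t'"
proof -
  have "c1 i t = c1 i t' \<and> c2 i t = c2 i t'" using coord[OF assms(1)] assms(6) unfolding xa_def by blast
  moreover have S: "sin (al i) > 0" using ang(4)[OF assms(1)] .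
  moreover have n1: "norm (d1 i) > 0" "norm (d2 i) > 0" using nz[OF assms(1)] by auto
  ultimately have e1: "sin (al i - t) = sin (al i - t')" and e2: "sin t = sin t'"
    using rho(1) by (auto simp: c1_def c2_def)
  have "sin (al i) * cos t = sin (al i) * cos t'"
    using e1 e2 by (simp add: sin_diff)
  then have "cos t = cos t'" using S by simp
  then show ?thesis
    by (rule cos_inj_pi[rotated 4]) (use assms ang(2)[OF assms(1)] in auto)
qed

lemma arcdisj: assumes "i < k" "j < k" "i \<noteq> j" "0 < t" "t < al i" shows "xa i t \<notin> T j"
proof
  assume xj: "xa i t \<in> T j"
  have xi: "xa i t \<in> T i" using arcT assms by auto
  have cp: "c1 i t > 0" "c2 i t > 0" using arcpos assms by auto
  from inter_seg[OF assms(1,2,3)] show False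
  proof
    assume "T i \<inter> T j = {v}"
    then have "xa i t = v + 0 *\<^sub>R d1 i + 0 *\<^sub>R d2 i" using xi xj by auto
    from coord[OF assms(1) this[unfolded xa_def]] show False using cp by simp
  next
    assume "\<exists>w. T i \<inter> T j = closed_segment v w \<and> (w = a i \<or> w = b i) \<and> (w = a j \<or> w = b j)"
    then obtain w where w: "T i \<inter> T j = closed_segment v w" "w = a i \<or> w = b i" by blast
    have "xa i t \<in> closed_segment v w" using w(1) xi xj by blast
    then obtain u where u: "xa i t = (1 - u) *\<^sub>R v + u *\<^sub>R w" unfolding closed_segment_def by blast
    then have u': "xa i t = v + u *\<^sub>R (w - v)" by (simp add: algebra_simps)
    from w(2) show False
    proof
      assume "w = a i"
      then have "xa i t = v + u *\<^sub>R d1 i + 0 *\<^sub>R d2 i" using u' by simp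
      from coord[OF assms(1) this[unfolded xa_def]] show False using cp by simp
    next
      assume "w = b i"
      then have "xa i t = v + 0 *\<^sub>R d1 i + u *\<^sub>R d2 i" using u' by simp
      from coord[OF assms(1) this[unfolded xa_def]] show False using cp by simp
    qed
  qed
qed

lemma arccont: "continuous_on S (xa i)"
proof -
  have "c1 i = (\<lambda>t. (rho / (sin (al i) * norm (d1 i))) * sin (al i - t))"
    "c2 i = (\<lambda>t. (rho / (sin (al i) * norm (d2 i))) * sin t)"
    by (auto simp: c1_def c2_def fun_eq_iff)
  then show ?thesis unfolding xa_def by (simp only:) (intro continuous_intros)
qed

end



lemma inner_diff_two:
  fixes x y :: "'a::real_inner"
  shows "(x - c *\<^sub>R y) \<bullet> (x - c *\<^sub>R y) = x \<bullet> x - 2 * c * (x \<bullet> y) + c\<^sup>2 * (y \<bullet> y)"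
    and "y \<bullet> (x - c *\<^sub>R y) = x \<bullet> y - c * (y \<bullet> y)"
  by (simp_all add: inner_diff_left inner_diff_right inner_commute[of y x] power2_eq_square algebra_simps)

context pconf begin

definition pp :: pt2 where "pp = apex (SOME z. z \<in> PP - C)"
definition DD :: "nat \<Rightarrow> real set" where "DD i = {t \<in> {0<..<al i}. xa i t \<in> C}"

lemma arcPC: assumes "i < k" "t \<in> {0<..<al i}" "t \<notin> DD i"
  shows "xa i t \<in> T i - C" "xa i t \<in> PP - C"
proof -
  have "xa i t \<in> T i" using arcT[OF assms(1)] assms(2) by simp
  moreover have "xa i t \<notin> C" using assms(2,3) by (simp add: DD_def)
  ultimately show "xa i t \<in> T i - C" "xa i t \<in> PP - C" using assms(1) by auto
qed

lemma C_sphere_fin: "finite (C \<inter> sphere v r)"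
proof -
  have "C \<inter> sphere v r = (\<Union>pq\<in>Sg. closed_segment (fst pq) (snd pq) \<inter> sphere v r)"
    by (auto simp: C_def)
  moreover have "finite (\<Union>pq\<in>Sg. closed_segment (fst pq) (snd pq) \<inter> sphere v r)"
    by (rule finite_UN_I[OF Sg_fin]) (rule seg_sphere_finite)
  ultimately show ?thesis by simp
qed

lemma DD_fin: assumes "i < k" shows "finite (DD i)"
proof -
  have "xa i ` DD i \<subseteq> C \<inter> sphere v rho"
  proof
    fix y assume "y \<in> xa i ` DD i"
    then obtain t where t: "t \<in> DD i" "y = xa i t" by blast
    have "dist v y = rho" using arcnorm[OF assms, of t] t(2) by (simp add: dist_norm norm_minus_commute)
    then show "y \<in> C \<inter> sphere v rho" using t by (simp add: DD_def)
  qed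
  then have fin: "finite (xa i ` DD i)" using C_sphere_fin by (rule finite_subset)
  have "inj_on (xa i) (DD i)"
  proof (rule inj_onI)
    fix t t' assume "t \<in> DD i" "t' \<in> DD i" "xa i t = xa i t'"
    then show "t = t'" using arcinj[OF assms, of t t'] by (simp add: DD_def)
  qed
  then show ?thesis using fin finite_imageD by blast
qed

lemma cn: assumes "i < k"
  shows "c1 i t * norm (d1 i) = (rho / sin (al i)) * sin (al i - t)"
    "c2 i t * norm (d2 i) = (rho / sin (al i)) * sin t"
proof -
  have S: "sin (al i) > 0" using ang(4)[OF assms] .
  have n1: "norm (d1 i) > 0" "norm (d2 i) > 0" using nz[OF assms] by auto
  show "c1 i t * norm (d1 i) = (rho / sin (al i)) * sin (al i - t)"
    unfolding c1_def using n1 S by (simp add: field_simps)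
  show "c2 i t * norm (d2 i) = (rho / sin (al i)) * sin t"
    unfolding c2_def using n1 S by (simp add: field_simps)
qed

lemma INT: assumes i: "i < k" and ce: "0 \<le> c" "c < e" "e \<le> al i" and dis: "{c<..<e} \<inter> DD i = {}"
  shows "\<exists>\<theta> \<sigma>. (\<sigma> = 1 \<or> \<sigma> = -1) \<and> (\<forall>t\<in>{c<..<e}. f (xa i t) = pp + rho *\<^sub>R circ (\<theta> + \<sigma> * t))"
proof -
  have sub: "t \<in> {0<..<al i} \<and> t \<notin> DD i" if "t \<in> {c<..<e}" for t
    using that ce dis by auto
  define t0 where "t0 = (c + e) / 2"
  have t0: "t0 \<in> {c<..<e}" using ce by (simp add: t0_def)
  define x0 where "x0 = xa i t0"
  have x0: "x0 \<in> T i - C" "x0 \<in> PP - C" using arcPC[OF i] sub[OF t0] by (auto simp: x0_def)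
  have Kc: "connected (xa i ` {c<..<e})"
    by (rule connected_continuous_image[OF arccont connected_Ioo])
  have KT: "xa i ` {c<..<e} \<subseteq> T i - C" using arcPC(1)[OF i] sub by blast
  have K: "xa i ` {c<..<e} \<subseteq> cc i x0"
    by (rule connected_component_maximal) (use t0 Kc KT in \<open>auto simp: x0_def\<close>)
  obtain P0 W1 W2 where g11: "W1 \<bullet> W1 = d1 i \<bullet> d1 i" and g22: "W2 \<bullet> W2 = d2 i \<bullet> d2 i"
    and g12: "W1 \<bullet> W2 = d1 i \<bullet> d2 i" and va: "valid i x0 P0 W1 W2"
    using data[OF i x0(1)] by blast
  have "apex x0 = P0" by (rule apex_eq[OF i x0(1) va])
  moreover have "pp = apex x0"
  proof -
    have "(SOME z. z \<in> PP - C) \<in> PP - C" using x0(2) by (rule someI)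
    then show ?thesis unfolding pp_def using apex_const x0(2) by blast
  qed
  ultimately have P0: "P0 = pp" by simp
  define S where "S = sin (al i)"
  define Co where "Co = cos (al i)"
  define n1 where "n1 = norm (d1 i)"
  define n2 where "n2 = norm (d2 i)"
  have S: "S > 0" using ang(4)[OF i] by (simp add: S_def)
  have n: "n1 > 0" "n2 > 0" using nz[OF i] by (auto simp: n1_def n2_def)
  have SC: "S\<^sup>2 + Co\<^sup>2 = 1" by (simp add: S_def Co_def)
  have d12: "d1 i \<bullet> d2 i = Co * n1 * n2"
    using ang(3)[OF i] n by (simp add: Co_def n1_def n2_def field_simps)
  define E1 where "E1 = (1 / n1) *\<^sub>R W1"
  define U where "U = (1 / n2) *\<^sub>R W2"
  define E2 where "E2 = (1 / S) *\<^sub>R (U - Co *\<^sub>R E1)"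
  have E11: "E1 \<bullet> E1 = 1" using g11 n unfolding E1_def
    by (simp add: dot_square_norm n1_def power2_eq_square)
  have UU: "U \<bullet> U = 1" using g22 n unfolding U_def
    by (simp add: dot_square_norm n2_def power2_eq_square)
  have E1U: "E1 \<bullet> U = Co" using g12 d12 n unfolding E1_def U_def by simp
  have E12: "E1 \<bullet> E2 = 0"
  proof -
    have "E1 \<bullet> E2 = (1/S) * (E1 \<bullet> (U - Co *\<^sub>R E1))" by (simp add: E2_def)
    also have "E1 \<bullet> (U - Co *\<^sub>R E1) = U \<bullet> E1 - Co * (E1 \<bullet> E1)" by (rule inner_diff_two(2))
    finally show ?thesis using E11 E1U by (simp add: inner_commute)
  qed
  have E22: "E2 \<bullet> E2 = 1"
  proof -
    have "E2 \<bullet> E2 = (1/S)\<^sup>2 * ((U - Co *\<^sub>R E1) \<bullet> (U - Co *\<^sub>R E1))" by (simp add: E2_def power2_eq_square)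
    also have "(U - Co *\<^sub>R E1) \<bullet> (U - Co *\<^sub>R E1) = U \<bullet> U - 2 * Co * (U \<bullet> E1) + Co\<^sup>2 * (E1 \<bullet> E1)"
      by (rule inner_diff_two(1))
    also have "\<dots> = S\<^sup>2" using UU E11 E1U SC by (simp add: inner_commute power2_eq_square algebra_simps)
    finally show ?thesis using S by (simp add: power2_eq_square)
  qed
  obtain \<theta> \<sigma> where \<sigma>: "\<sigma> = 1 \<or> \<sigma> = -1" and th: "\<forall>t. cos t *\<^sub>R E1 + sin t *\<^sub>R E2 = circ (\<theta> + \<sigma> * t)"
    using ON2[OF E11 E22 E12] by blast
  have W1e: "W1 = n1 *\<^sub>R E1" using n by (simp add: E1_def)
  have Ue: "U = S *\<^sub>R E2 + Co *\<^sub>R E1" using S by (simp add: E2_def)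
  have W2e: "W2 = n2 *\<^sub>R U" using n by (simp add: U_def)
  have "\<forall>t\<in>{c<..<e}. f (xa i t) = pp + rho *\<^sub>R circ (\<theta> + \<sigma> * t)"
  proof
    fix t assume t: "t \<in> {c<..<e}"
    have "xa i t \<in> cc i x0" using K t by blast
    then have fx: "f (xa i t) = P0 + c1 i t *\<^sub>R W1 + c2 i t *\<^sub>R W2"
      by (rule validD[OF va]) (simp add: xa_def)
    have "c1 i t *\<^sub>R W1 + c2 i t *\<^sub>R W2
        = (c1 i t * n1 + c2 i t * n2 * Co) *\<^sub>R E1 + (c2 i t * n2 * S) *\<^sub>R E2"
      unfolding W1e W2e Ue by (simp add: scaleR_add_right scaleR_add_left algebra_simps)
    also have "c1 i t * n1 + c2 i t * n2 * Co = rho * cos t"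
    proof -
      have "c1 i t * n1 + c2 i t * n2 * Co = (rho / S) * (sin (al i - t) + sin t * Co)"
        using cn[OF i, of t] by (simp add: n1_def n2_def S_def algebra_simps)
      also have "sin (al i - t) + sin t * Co = S * cos t" by (simp add: sin_diff S_def Co_def)
      finally show ?thesis using S by simp
    qed
    also have "c2 i t * n2 * S = rho * sin t"
      using cn(2)[OF i, of t] S by (simp add: n2_def S_def)
    also have "(rho * cos t) *\<^sub>R E1 + (rho * sin t) *\<^sub>R E2 = rho *\<^sub>R (cos t *\<^sub>R E1 + sin t *\<^sub>R E2)"
      by (simp add: scaleR_add_right)
    finally have "c1 i t *\<^sub>R W1 + c2 i t *\<^sub>R W2 = rho *\<^sub>R (cos t *\<^sub>R E1 + sin t *\<^sub>R E2)" .
    then show "f (xa i t) = pp + rho *\<^sub>R circ (\<theta> + \<sigma> * t)"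
      using fx th P0 by (simp add: add.assoc)
  qed
  then show ?thesis using \<sigma> by blast
qed


lemma contra: False
proof -
  define \<Theta> where "\<Theta> = (\<Sum>i<k. al i)"
  have Th: "\<Theta> > 2 * pi" using neg_curv by (simp add: \<Theta>_def al_def)
  define N0 :: nat where "N0 = (\<Sum>i<k. card (DD i) + 1)"
  define q where "q = \<Theta> / (2 * pi) - 1"
  have q: "q > 0" using Th by (simp add: q_def field_simps)
  define M :: nat where "M = nat \<lceil>real N0 / q\<rceil> + 1"
  have M0: "M > 0" by (simp add: M_def)
  have "real N0 / q \<le> real (nat \<lceil>real N0 / q\<rceil>)" by linarith
  then have "real N0 / q < real M" by (simp add: M_def)
  then have MN: "real N0 < real M * q" using q by (simp add: divide_less_eq)
  define h where "h = 2 * pi / M"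
  have h: "h > 0" using M0 by (simp add: h_def)
  define Grid where "Grid = (\<lambda>n::nat. pp + rho *\<^sub>R circ (2 * pi * n / M)) ` {..<M}"
  have Gfin: "finite Grid" by (simp add: Grid_def)
  have Gcard: "card Grid \<le> M" unfolding Grid_def by (rule card_image_le[THEN order_trans]) simp_all
  have gridmem: "pp + rho *\<^sub>R circ y \<in> Grid \<longleftrightarrow> (\<exists>m::int. y = m * h)" for y
  proof -
    have "pp + rho *\<^sub>R circ y \<in> Grid \<longleftrightarrow> (\<exists>n<M. circ y = circ (2 * pi * n / M))"
      unfolding Grid_def using rho(1) by auto
    also have "\<dots> \<longleftrightarrow> (\<exists>n<M. \<exists>j::int. y = 2 * pi * n / M + 2 * pi * j)"
      by (simp add: circ_eq)
    also have "\<dots> \<longleftrightarrow> (\<exists>m::int. y = m * h)" unfolding h_def by (rule grid_iff[OF M0])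
    finally show ?thesis .
  qed
  define good where "good i = {t \<in> {0<..<al i} - DD i. f (xa i t) \<in> Grid}" for i
  define SG where "SG = Sigma {..<k} good"
  define g where "g = (\<lambda>(i, t). f (xa i t))"
  have SGin: "i < k \<and> t \<in> {0<..<al i} \<and> t \<notin> DD i \<and> f (xa i t) \<in> Grid" if "(i, t) \<in> SG" for i t
    using that by (auto simp: SG_def good_def)
  have ginj: "inj_on g SG"
  proof (rule inj_onI)
    fix z z' assume z: "z \<in> SG" "z' \<in> SG" "g z = g z'"
    obtain i t where it: "z = (i, t)" by (cases z)
    obtain j t' where jt: "z' = (j, t')" by (cases z')
    have A: "i < k" "t \<in> {0<..<al i}" "t \<notin> DD i" using SGin z(1) it by auto
    have B: "j < k" "t' \<in> {0<..<al j}" "t' \<notin> DD j" using SGin z(2) jt by auto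
    have "f (xa i t) = f (xa j t')" using z(3) it jt by (simp add: g_def)
    then have eq: "xa i t = xa j t'"
      using finj arcPC(2)[OF A] arcPC(2)[OF B] by (auto dest: inj_onD)
    have ij: "i = j"
    proof (rule ccontr)
      assume "i \<noteq> j"
      have "xa j t' \<in> T j" using arcPC(1)[OF B] by simp
      moreover have "xa i t \<notin> T j" using arcdisj[OF A(1) B(1) \<open>i \<noteq> j\<close>] A(2) by simp
      ultimately show False using eq by simp
    qed
    then have "t = t'" using arcinj[OF A(1), of t t'] A(2) B(2) eq by auto
    then show "z = z'" using it jt ij by simp
  qed
  have gim: "g ` SG \<subseteq> Grid" using SGin by (auto simp: g_def)
  then have "finite (g ` SG)" using Gfin by (rule finite_subset)
  then have SGfin: "finite SG" using ginj finite_imageD by blast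
  have goodfin: "finite (good i)" if "i < k" for i
  proof -
    have "good i \<subseteq> snd ` SG" using that by (force simp: SG_def)
    then show ?thesis using SGfin by (rule finite_subset[OF _ finite_imageI])
  qed
  have "card SG = card (g ` SG)" using ginj by (simp add: card_image)
  also have "\<dots> \<le> card Grid" using gim Gfin by (rule card_mono[rotated])
  finally have cSG: "card SG \<le> M" using Gcard by simp
  have cS: "card SG = (\<Sum>i<k. card (good i))" unfolding SG_def
    by (rule card_SigmaI) (use goodfin in auto)
  have cnt: "real (card (good i)) \<ge> al i / h - real (card (DD i)) - 1" if i: "i < k" for i
  proof -
    have "real (card (good i \<inter> {0<..<al i})) \<ge> (al i - 0) / h - real (card (DD i \<inter> {0<..<al i})) - 1"
    proof (rule count_gen[OF h goodfin[OF i] DD_fin[OF i]])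
      fix c e assume ce: "0 \<le> c" "c < e" "e \<le> al i" "{c<..<e} \<inter> DD i = {}"
      obtain \<theta> \<sigma> where \<sigma>: "\<sigma> = 1 \<or> \<sigma> = -1"
        and th: "\<forall>t\<in>{c<..<e}. f (xa i t) = pp + rho *\<^sub>R circ (\<theta> + \<sigma> * t)"
        using INT[OF i ce] by blast
      have "\<forall>t\<in>{c<..<e}. t \<in> good i \<longleftrightarrow> (\<exists>m::int. \<theta> + \<sigma> * t = m * h)"
      proof
        fix t assume t: "t \<in> {c<..<e}"
        have "t \<in> {0<..<al i} - DD i" using t ce by auto
        then have "t \<in> good i \<longleftrightarrow> f (xa i t) \<in> Grid" by (simp add: good_def)
        also have "\<dots> \<longleftrightarrow> pp + rho *\<^sub>R circ (\<theta> + \<sigma> * t) \<in> Grid" using th t by simp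
        also have "\<dots> \<longleftrightarrow> (\<exists>m::int. \<theta> + \<sigma> * t = m * h)" by (rule gridmem)
        finally show "t \<in> good i \<longleftrightarrow> (\<exists>m::int. \<theta> + \<sigma> * t = m * h)" .
      qed
      then show "\<exists>\<theta> \<sigma>. (\<sigma> = 1 \<or> \<sigma> = -1) \<and> (\<forall>t\<in>{c<..<e}. t \<in> good i \<longleftrightarrow> (\<exists>m::int. \<theta> + \<sigma> * t = m * h))"
        using \<sigma> by blast
    next
      show "0 \<le> al i" using ang(1)[OF i] by simp
    qed
    moreover have "good i \<inter> {0<..<al i} = good i" by (auto simp: good_def)
    moreover have "card (DD i \<inter> {0<..<al i}) = card (DD i)"
      by (rule arg_cong[where f=card]) (auto simp: DD_def)
    ultimately show ?thesis by simp
  qed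
  have "(\<Sum>i<k. al i / h - real (card (DD i)) - 1) \<le> (\<Sum>i<k. real (card (good i)))"
    by (rule sum_mono) (use cnt in auto)
  also have "\<dots> = real (card SG)" unfolding cS by simp
  also have "\<dots> \<le> real M" using cSG by simp
  finally have ineq: "(\<Sum>i<k. al i / h - real (card (DD i)) - 1) \<le> real M" .
  have "(\<Sum>i<k. al i / h - real (card (DD i)) - 1) = \<Theta> / h - real N0"
    by (simp add: \<Theta>_def N0_def sum_subtractf sum_divide_distrib sum.distrib algebra_simps)
  also have "\<Theta> / h = real M * (\<Theta> / (2 * pi))" using M0 by (simp add: h_def field_simps)
  finally have "real M * (\<Theta> / (2 * pi)) - real N0 \<le> real M" using ineq by simp
  then have "real M * q \<le> real N0" by (simp add: q_def algebra_simps)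
  then show False using MN by simp
qed

end


theorem theorem11:
  fixes k :: nat and v :: pt3 and a :: "nat \<Rightarrow> pt3"
  defines "T \<equiv> (\<lambda>i. tri v (a i) (a (Suc i mod k)))"
  assumes k3: "k \<ge> 3"
    and a_inj: "inj_on a {..<k}"
    and nondeg: "\<forall>i<k. \<not> collinear {v, a i, a (Suc i mod k)}"
    and inter: "\<forall>i<k. \<forall>j<k. i \<noteq> j \<longrightarrow>
        T i \<inter> T j = (if j = Suc i mod k then closed_segment v (a j)
                      else if i = Suc j mod k then closed_segment v (a i)
                      else {v})"
    and neg_curv: "(\<Sum>i<k. vangle (a i - v) (a (Suc i mod k) - v)) > 2 * pi"
  shows "\<not> has_general_unfolding (T ` {..<k})
           (\<Union>i<k. closed_segment (a i) (a (Suc i mod k)))"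
proof
  assume "has_general_unfolding (T ` {..<k}) (\<Union>i<k. closed_segment (a i) (a (Suc i mod k)))"
  then obtain C f where cut: "is_cutting (\<Union>(T ` {..<k})) (\<Union>i<k. closed_segment (a i) (a (Suc i mod k))) C"
    and fl: "flat_embedding (T ` {..<k}) C f"
    unfolding has_general_unfolding_def by blast
  from cut obtain Sg where Sg: "finite Sg" "C = (\<Union>(p, q)\<in>Sg. closed_segment p q)"
    and conn: "connected (\<Union>(T ` {..<k}) - C)"
    unfolding is_cutting_def by blast
  from fl have finj: "inj_on f (\<Union>(T ` {..<k}) - C)"
    and iso: "\<forall>F\<in>T ` {..<k}. \<forall>x\<in>F - C. \<forall>y\<in>connected_component_set (F - C) x.
           dist (f x) (f y) = dist x y"
    unfolding flat_embedding_def by blast+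
  have Teq: "T = (\<lambda>i. tri v (a i) (a (Suc i mod k)))" by (simp add: T_def)
  interpret P: pconf k v a C f Sg T
    by (rule pconf.intro[OF Teq k3 nondeg inter neg_curv Sg(1) Sg(2) conn finj iso])
  show False by (rule P.contra)
qed

end
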